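(* Let $(Y,\preceq,\prec,\to)$ be a solid vector space and let $\tau$ be its order topology. Then: (i) for a sequence $(x_n)$ in $Y$ and $x\in Y$, $x_n\to x$ in $\tau$ if and only if for every $c\succ0$ there exists $N\in\mathbb N$ such that $x-c\prec x_n\prec x+c$ for all $n>N$; (ii) $x_n\to x$ implies that $x_n\to x$ in $\tau$.
   Context: Vector space with convergence: a real vector space $Y$ with a relation $\to$ between sequences in $Y$ and points of $Y$ (uniqueness of limits not assumed) such that (C1) $x_n\to x$, $y_n\to y$ imply $x_n+y_n\to x+y$; (C2) $x_n\to x$, $\lambda\in\mathbb R$ imply $\lambda x_n\to\lambda x$; (C3) $\lambda_n\to\lambda$ in $\mathbb R$ imply $\lambda_n x\to\lambda x$. $A\subseteq Y$ is open if $x_n\to x\in A$ implies $x_n\in A$ for all but finitely many $n$; closed if $x_n\to x$, $x_n\in A$ $\forall n$ imply $x\in A$; $A^\circ$ is the union of all open subsets of $A$. A cone is a nonempty closed $K$ with $\lambda K\subseteq K$ ($\lambda\ge0$), $K+K\subseteq K$, $K\cap(-K)=\{0\}$; solid if $K\neq\{0\}$, $K^\circ\ne\emptyset$. A vector ordering is a partial order $\preceq$ with (V1) $x\preceq y\Rightarrow x+z\preceq y+z$; (V2) $\lambda\ge0$, $x\preceq y\Rightarrow\lambda x\preceq\lambda y$; (V3) $x_n\to x$, $y_n\to y$, $x_n\preceq y_n$ $\forall n\Rightarrow x\preceq y$. Solid vector space: positive cone $K=\{x:x\succeq0\}$ solid, with $x\prec y$ iff $y-x\in K^\circ$. The order topology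 $\tau$ on a solid vector space is the topology with basis the open intervals $(a,b)=\{x: a\prec x\prec b\}$, $a\prec b$. *)

theory Defs
  imports "HOL-Analysis.Analysis"
begin

text \<open>A convergence on a real vector space: a relation between sequences and points,
  satisfying (C1)-(C3). Uniqueness of limits is not assumed.\<close>
definition conv_space :: "((nat \<Rightarrow> 'a::real_vector) \<Rightarrow> 'a \<Rightarrow> bool) \<Rightarrow> bool" where
  "conv_space conv \<longleftrightarrow>
     (\<forall>xs ys x y. conv xs x \<and> conv ys y \<longrightarrow> conv (\<lambda>n. xs n + ys n) (x + y)) \<and>
     (\<forall>xs x (c::real). conv xs x \<longrightarrow> conv (\<lambda>n. c *\<^sub>R xs n) (c *\<^sub>R x)) \<and>
     (\<forall>(ls::nat \<Rightarrow> real) l x. ls \<longlonglongrightarrow> l \<longrightarrow> conv (\<lambda>n. ls n *\<^sub>R x) (l *\<^sub>R x))"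

definition conv_open :: "((nat \<Rightarrow> 'a) \<Rightarrow> 'a \<Rightarrow> bool) \<Rightarrow> 'a set \<Rightarrow> bool" where
  "conv_open conv A \<longleftrightarrow>
     (\<forall>xs x. conv xs x \<and> x \<in> A \<longrightarrow> (\<forall>\<^sub>F n in sequentially. xs n \<in> A))"

definition conv_closed :: "((nat \<Rightarrow> 'a) \<Rightarrow> 'a \<Rightarrow> bool) \<Rightarrow> 'a set \<Rightarrow> bool" where
  "conv_closed conv A \<longleftrightarrow> (\<forall>xs x. conv xs x \<and> (\<forall>n. xs n \<in> A) \<longrightarrow> x \<in> A)"

definition conv_interior :: "((nat \<Rightarrow> 'a) \<Rightarrow> 'a \<Rightarrow> bool) \<Rightarrow> 'a set \<Rightarrow> 'a set" where
  "conv_interior conv A = \<Union>{U. U \<subseteq> A \<and> conv_open conv U}"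

definition conv_cone :: "((nat \<Rightarrow> 'a::real_vector) \<Rightarrow> 'a \<Rightarrow> bool) \<Rightarrow> 'a set \<Rightarrow> bool" where
  "conv_cone conv K \<longleftrightarrow> K \<noteq> {} \<and> conv_closed conv K \<and>
     (\<forall>(c::real) x. c \<ge> 0 \<and> x \<in> K \<longrightarrow> c *\<^sub>R x \<in> K) \<and>
     (\<forall>x y. x \<in> K \<and> y \<in> K \<longrightarrow> x + y \<in> K) \<and>
     K \<inter> uminus ` K = {0}"

definition solid_cone :: "((nat \<Rightarrow> 'a::real_vector) \<Rightarrow> 'a \<Rightarrow> bool) \<Rightarrow> 'a set \<Rightarrow> bool" where
  "solid_cone conv K \<longleftrightarrow> conv_cone conv K \<and> K \<noteq> {0} \<and> conv_interior conv K \<noteq> {}"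

definition vector_ordering ::
  "((nat \<Rightarrow> 'a::real_vector) \<Rightarrow> 'a \<Rightarrow> bool) \<Rightarrow> ('a \<Rightarrow> 'a \<Rightarrow> bool) \<Rightarrow> bool" where
  "vector_ordering conv le \<longleftrightarrow>
     (\<forall>x. le x x) \<and> (\<forall>x y. le x y \<and> le y x \<longrightarrow> x = y) \<and>
     (\<forall>x y z. le x y \<and> le y z \<longrightarrow> le x z) \<and>
     (\<forall>x y z. le x y \<longrightarrow> le (x + z) (y + z)) \<and>
     (\<forall>(c::real) x y. c \<ge> 0 \<and> le x y \<longrightarrow> le (c *\<^sub>R x) (c *\<^sub>R y)) \<and>
     (\<forall>xs ys x y. conv xs x \<and> conv ys y \<and> (\<forall>n. le (xs n) (ys n)) \<longrightarrow> le x y)"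

definition positive_cone :: "('a::real_vector \<Rightarrow> 'a \<Rightarrow> bool) \<Rightarrow> 'a set" where
  "positive_cone le = {x. le 0 x}"

definition solid_vector_space ::
  "((nat \<Rightarrow> 'a::real_vector) \<Rightarrow> 'a \<Rightarrow> bool) \<Rightarrow> ('a \<Rightarrow> 'a \<Rightarrow> bool) \<Rightarrow> bool" where
  "solid_vector_space conv le \<longleftrightarrow>
     conv_space conv \<and> vector_ordering conv le \<and> solid_cone conv (positive_cone le)"

definition strict_lt ::
  "((nat \<Rightarrow> 'a::real_vector) \<Rightarrow> 'a \<Rightarrow> bool) \<Rightarrow> ('a \<Rightarrow> 'a \<Rightarrow> bool) \<Rightarrow> 'a \<Rightarrow> 'a \<Rightarrow> bool" where
  "strict_lt conv le x y \<longleftrightarrow> y - x \<in> conv_interior conv (positive_cone le)"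

definition order_topology_sv ::
  "((nat \<Rightarrow> 'a::real_vector) \<Rightarrow> 'a \<Rightarrow> bool) \<Rightarrow> ('a \<Rightarrow> 'a \<Rightarrow> bool) \<Rightarrow> 'a topology" where
  "order_topology_sv conv le = topology_generated_by
     {{x. strict_lt conv le a x \<and> strict_lt conv le x b} | a b. strict_lt conv le a b}"

end

theory Submission
  imports Defs
begin

locale svs =
  fixes conv :: "(nat \<Rightarrow> 'a::real_vector) \<Rightarrow> 'a \<Rightarrow> bool"
    and le :: "'a \<Rightarrow> 'a \<Rightarrow> bool"
  assumes svs: "solid_vector_space conv le"
begin

abbreviation "K \<equiv> positive_cone le"
abbreviation "Ki \<equiv> conv_interior conv K"

lemma C1: "conv xs x \<Longrightarrow> conv ys y \<Longrightarrow> conv (\<lambda>n. xs n + ys n) (x + y)"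
  using svs unfolding solid_vector_space_def conv_space_def by blast
lemma C2: "conv xs x \<Longrightarrow> conv (\<lambda>n. c *\<^sub>R xs n) (c *\<^sub>R x)"
  using svs unfolding solid_vector_space_def conv_space_def by blast
lemma C3: "ls \<longlonglongrightarrow> l \<Longrightarrow> conv (\<lambda>n. ls n *\<^sub>R x) (l *\<^sub>R x)"
  using svs unfolding solid_vector_space_def conv_space_def by blast
lemma const: "conv (\<lambda>n. x) x"
  using C3[of "\<lambda>n. 1" 1 x] by simp

lemma Kscale: "c \<ge> 0 \<Longrightarrow> x \<in> K \<Longrightarrow> c *\<^sub>R x \<in> K"
  using svs unfolding solid_vector_space_def solid_cone_def conv_cone_def by blast
lemma Kadd: "x \<in> K \<Longrightarrow> y \<in> K \<Longrightarrow> x + y \<in> K"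
  using svs unfolding solid_vector_space_def solid_cone_def conv_cone_def by blast
lemma Ki_ne: "Ki \<noteq> {}"
  using svs unfolding solid_vector_space_def solid_cone_def by blast

lemma Ki_sub: "Ki \<subseteq> K"
  unfolding conv_interior_def by blast

lemma Ki_open: "conv_open conv Ki"
  unfolding conv_open_def
proof (intro allI impI)
  fix xs x assume h: "conv xs x \<and> x \<in> Ki"
  then obtain U where U: "U \<subseteq> K" "conv_open conv U" "x \<in> U"
    unfolding conv_interior_def by blast
  then have "\<forall>\<^sub>F n in sequentially. xs n \<in> U" using h unfolding conv_open_def by blast
  then show "\<forall>\<^sub>F n in sequentially. xs n \<in> Ki"
    by (rule eventually_mono) (use U in \<open>auto simp: conv_interior_def\<close>)
qed

lemma Ki_eventually: "conv xs x \<Longrightarrow> x \<in> Ki \<Longrightarrow> \<forall>\<^sub>F n in sequentially. xs n \<in> Ki"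
  using Ki_open unfolding conv_open_def by blast

lemma Ki_addK: assumes "u \<in> Ki" "v \<in> K" shows "u + v \<in> Ki"
proof -
  obtain U where U: "U \<subseteq> K" "conv_open conv U" "u \<in> U"
    using assms(1) unfolding conv_interior_def by blast
  define V where "V = (\<lambda>y. y + v) ` U"
  have "V \<subseteq> K" using U assms(2) Kadd unfolding V_def by blast
  moreover have "conv_open conv V"
    unfolding conv_open_def
  proof (intro allI impI)
    fix xs x assume h: "conv xs x \<and> x \<in> V"
    have "conv (\<lambda>n. xs n + (- v)) (x + (- v))" using h C1 const by blast
    moreover have "x + - v \<in> U" using h unfolding V_def by auto
    ultimately have "\<forall>\<^sub>F n in sequentially. xs n + - v \<in> U"
      using U(2) unfolding conv_open_def by blast
    then show "\<forall>\<^sub>F n in sequentially. xs n \<in> V"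
      by (rule eventually_mono) (auto simp: V_def image_iff intro!: bexI[where x="_ + - v"])
  qed
  moreover have "u + v \<in> V" using U unfolding V_def by auto
  ultimately show ?thesis unfolding conv_interior_def by blast
qed

lemma Ki_scale: assumes "u \<in> Ki" "c > 0" shows "c *\<^sub>R u \<in> Ki"
proof -
  obtain U where U: "U \<subseteq> K" "conv_open conv U" "u \<in> U"
    using assms(1) unfolding conv_interior_def by blast
  define V where "V = (\<lambda>y. c *\<^sub>R y) ` U"
  have "V \<subseteq> K" using U assms(2) Kscale unfolding V_def by fastforce
  moreover have "conv_open conv V"
    unfolding conv_open_def
  proof (intro allI impI)
    fix xs x assume h: "conv xs x \<and> x \<in> V"
    have "conv (\<lambda>n. inverse c *\<^sub>R xs n) (inverse c *\<^sub>R x)" using h C2 by blast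
    moreover have "inverse c *\<^sub>R x \<in> U" using h assms(2) unfolding V_def by auto
    ultimately have "\<forall>\<^sub>F n in sequentially. inverse c *\<^sub>R xs n \<in> U"
      using U(2) unfolding conv_open_def by blast
    then show "\<forall>\<^sub>F n in sequentially. xs n \<in> V"
      by (rule eventually_mono) (use assms(2) in \<open>auto simp: V_def image_iff intro!: bexI[where x="inverse c *\<^sub>R _"]\<close>)
  qed
  moreover have "c *\<^sub>R u \<in> V" using U unfolding V_def by auto
  ultimately show ?thesis unfolding conv_interior_def by blast
qed

lemma small: assumes "d1 \<in> Ki" "d2 \<in> Ki"
  shows "\<exists>c\<in>Ki. d1 - c \<in> K \<and> d2 - c \<in> K"
proof -
  have "(\<lambda>n. 1 / real (Suc n)) \<longlonglongrightarrow> 0" by (rule LIMSEQ_Suc[OF lim_const_over_n])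
  then have "conv (\<lambda>n. (1 / real (Suc n)) *\<^sub>R d2) (0 *\<^sub>R d2)" by (rule C3)
  then have "conv (\<lambda>n. (-1) *\<^sub>R ((1 / real (Suc n)) *\<^sub>R d2)) ((-1) *\<^sub>R (0 *\<^sub>R d2))" by (rule C2)
  then have "conv (\<lambda>n. d1 + (-1) *\<^sub>R ((1 / real (Suc n)) *\<^sub>R d2)) (d1 + (-1) *\<^sub>R (0 *\<^sub>R d2))"
    using C1 const by blast
  then have "\<forall>\<^sub>F n in sequentially. d1 + (-1) *\<^sub>R ((1 / real (Suc n)) *\<^sub>R d2) \<in> Ki"
    using Ki_eventually assms(1) by simp
  then obtain n where n: "d1 - (1 / real (Suc n)) *\<^sub>R d2 \<in> Ki"
    by (auto simp: eventually_sequentially)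
  define c where "c = (1 / real (Suc n)) *\<^sub>R d2"
  have "c \<in> Ki" unfolding c_def by (rule Ki_scale[OF assms(2)]) simp
  moreover have "d1 - c \<in> K" using n Ki_sub c_def by blast
  moreover have "d2 - c = (1 - 1 / real (Suc n)) *\<^sub>R d2" by (simp add: c_def algebra_simps)
  moreover have "(1 - 1 / real (Suc n)) *\<^sub>R d2 \<in> K"
    using Kscale Ki_sub assms(2) by (auto simp: field_simps)
  ultimately show ?thesis by auto
qed

abbreviation "lt \<equiv> strict_lt conv le"
abbreviation "B \<equiv> {{x. lt a x \<and> lt x b} | a b. lt a b}"

lemma basis_ok:
  assumes "S \<in> B" "x \<in> S"
  shows "\<exists>c. lt 0 c \<and> (\<forall>y. lt (x - c) y \<and> lt y (x + c) \<longrightarrow> y \<in> S)"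
proof -
  obtain a b where S: "S = {x. lt a x \<and> lt x b}" using assms(1) by blast
  have d1: "x - a \<in> Ki" and d2: "b - x \<in> Ki" using assms(2) S by (auto simp: strict_lt_def)
  obtain c where c: "c \<in> Ki" "x - a - c \<in> K" "b - x - c \<in> K" using small[OF d1 d2] by blast
  have "lt (x - c) y \<and> lt y (x + c) \<longrightarrow> y \<in> S" for y
  proof
    assume h: "lt (x - c) y \<and> lt y (x + c)"
    have "(y - (x - c)) + (x - a - c) \<in> Ki" using h c Ki_addK unfolding strict_lt_def by blast
    moreover have "(x + c - y) + (b - x - c) \<in> Ki" using h c Ki_addK unfolding strict_lt_def by blast
    moreover have "(y - (x - c)) + (x - a - c) = y - a" "(x + c - y) + (b - x - c) = b - y"
      by (simp_all add: algebra_simps)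
    ultimately show "y \<in> S" unfolding S strict_lt_def by simp
  qed
  moreover have "lt 0 c" using c by (simp add: strict_lt_def)
  ultimately show ?thesis by blast
qed

lemma topspace_all: "topspace (order_topology_sv conv le) = UNIV"
proof -
  obtain c where c: "c \<in> Ki" using Ki_ne by blast
  have "x \<in> \<Union>B" for x
  proof -
    have "lt (x - c) (x + c)" using Ki_addK[OF c Ki_sub[THEN subsetD, OF c]]
      by (simp add: strict_lt_def scaleR_2[symmetric] algebra_simps)
    moreover have "lt (x - c) x" "lt x (x + c)" using c by (auto simp: strict_lt_def)
    ultimately show ?thesis by blast
  qed
  then show ?thesis unfolding order_topology_sv_def by auto
qed

lemma part1:
  "limitin (order_topology_sv conv le) xs x sequentially \<longleftrightarrow>
    (\<forall>c. lt 0 c \<longrightarrow> (\<exists>N::nat. \<forall>n>N. lt (x - c) (xs n) \<and> lt (xs n) (x + c)))"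
proof
  assume L: "limitin (order_topology_sv conv le) xs x sequentially"
  show "\<forall>c. lt 0 c \<longrightarrow> (\<exists>N::nat. \<forall>n>N. lt (x - c) (xs n) \<and> lt (xs n) (x + c))"
  proof (intro allI impI)
    fix c assume c: "lt 0 c"
    let ?S = "{y. lt (x - c) y \<and> lt y (x + c)}"
    have "lt (x - c) (x + c)" using Ki_addK[of c c] c Ki_sub
      by (auto simp: strict_lt_def algebra_simps scaleR_2[symmetric])
    then have "?S \<in> B" by blast
    then have "openin (order_topology_sv conv le) ?S"
      unfolding order_topology_sv_def openin_topology_generated_by_iff
      by (rule generate_topology_on.Basis)
    moreover have "x \<in> ?S" using c by (auto simp: strict_lt_def)
    ultimately have "\<forall>\<^sub>F n in sequentially. xs n \<in> ?S" using L unfolding limitin_def by blast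
    then obtain N where "\<forall>n\<ge>N. xs n \<in> ?S" by (auto simp: eventually_sequentially)
    then show "\<exists>N::nat. \<forall>n>N. lt (x - c) (xs n) \<and> lt (xs n) (x + c)"
      using less_imp_le by blast
  qed
next
  assume R: "\<forall>c. lt 0 c \<longrightarrow> (\<exists>N::nat. \<forall>n>N. lt (x - c) (xs n) \<and> lt (xs n) (x + c))"
  have "generate_topology_on B U \<Longrightarrow> x \<in> U \<Longrightarrow> \<forall>\<^sub>F n in sequentially. xs n \<in> U" for U
  proof (induction rule: generate_topology_on.induct)
    case Empty then show ?case by simp
  next
    case (Int a b) then show ?case by (auto intro: eventually_conj elim: eventually_mono)
  next
    case (UN KK)
    then obtain k where k: "k \<in> KK" "x \<in> k" by blast
    with UN have "\<forall>\<^sub>F n in sequentially. xs n \<in> k" by blast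
    then show ?case by (rule eventually_mono) (use k in blast)
  next
    case (Basis s)
    obtain c where c: "lt 0 c" "\<forall>y. lt (x - c) y \<and> lt y (x + c) \<longrightarrow> y \<in> s"
      using basis_ok[OF Basis] by blast
    obtain N where "\<forall>n>N. lt (x - c) (xs n) \<and> lt (xs n) (x + c)" using R c(1) by blast
    then have "\<forall>n\<ge>Suc N. xs n \<in> s" using c(2) by auto
    then show ?case by (auto simp: eventually_sequentially)
  qed
  then show "limitin (order_topology_sv conv le) xs x sequentially"
    unfolding limitin_def topspace_all
    unfolding order_topology_sv_def openin_topology_generated_by_iff
    by blast
qed

lemma part2:
  assumes "conv xs x"
  shows "limitin (order_topology_sv conv le) xs x sequentially"
  unfolding part1
proof (intro allI impI)
  fix c assume c: "lt 0 c"
  then have cK: "c \<in> Ki" by (simp add: strict_lt_def)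
  have "conv (\<lambda>n. xs n + (- x + c)) (x + (- x + c))" using assms const C1 by blast
  then have e1: "\<forall>\<^sub>F n in sequentially. xs n + (- x + c) \<in> Ki" using Ki_eventually cK by simp
  have "conv (\<lambda>n. (-1) *\<^sub>R xs n) ((-1) *\<^sub>R x)" using assms C2 by blast
  then have "conv (\<lambda>n. (-1) *\<^sub>R xs n + (x + c)) ((-1) *\<^sub>R x + (x + c))" using const C1 by blast
  then have e2: "\<forall>\<^sub>F n in sequentially. (-1) *\<^sub>R xs n + (x + c) \<in> Ki" using Ki_eventually cK by simp
  obtain N where "\<forall>n\<ge>N. xs n + (- x + c) \<in> Ki \<and> (-1) *\<^sub>R xs n + (x + c) \<in> Ki"
    using eventually_conj[OF e1 e2] by (auto simp: eventually_sequentially)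
  then have "\<forall>n>N. lt (x - c) (xs n) \<and> lt (xs n) (x + c)"
    by (auto simp: strict_lt_def algebra_simps)
  then show "\<exists>N::nat. \<forall>n>N. lt (x - c) (xs n) \<and> lt (xs n) (x + c)" by blast
qed

end

theorem theorem6p5:
  fixes conv :: "(nat \<Rightarrow> 'a::real_vector) \<Rightarrow> 'a \<Rightarrow> bool"
    and le :: "'a \<Rightarrow> 'a \<Rightarrow> bool"
  assumes "solid_vector_space conv le"
  shows "(\<forall>xs x. limitin (order_topology_sv conv le) xs x sequentially \<longleftrightarrow>
            (\<forall>c. strict_lt conv le 0 c \<longrightarrow>
               (\<exists>N::nat. \<forall>n>N. strict_lt conv le (x - c) (xs n) \<and> strict_lt conv le (xs n) (x + c))))
       \<and> (\<forall>xs x. conv xs x \<longrightarrow> limitin (order_topology_sv conv le) xs x sequentially)"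
proof -
  interpret svs conv le by (rule svs.intro[OF assms])
  show ?thesis using part1 part2 by blast
qed

end
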